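(* Let $(A\mid R)$ and $(A'\mid R')$ be finite presentations such that $(A'\mid R')$ is obtained from $(A\mid R)$ by one of the transformations (I)–(VII). Then $\langle A\mid R\rangle\cong\langle A'\mid R'\rangle$.
   Context: $\mathbb{M}_A$ is the free magma on a non-empty set $A$ (non-associative words with $x+y=(x,y)$); $\mathbb{M}_A^2$ has componentwise operation. A closed congruence on $\mathbb{M}_A$ is an equivalence relation $\theta$ that is a submagma of $\mathbb{M}_A^2$ and satisfies: $(x+x',y+y')\in\theta\Rightarrow (x,y),(x',y')\in\theta$. For $X\subseteq\mathbb{M}_A^2$, $\boxminus(X)$ is the least closed congruence containing $X$. A finite presentation is $(A\mid R)$ with $A$ finite non-empty and $R\subseteq\mathbb{M}_A^2$ finite; $\langle A\mid R\rangle=\mathbb{M}_A/\boxminus(R)$. The minimal generating set of $\mathbb{M}_A^2$ is $\mathcal{G}(\mathbb{M}_A^2)=(A\times\mathbb{M}_A)\cup(\mathbb{M}_A\times A)$; for $p\in\mathbb{M}_A^2$, $\mathbf{g}(p)$ is defined recursively: $\mathbf{g}(p)=\mathbf{g}(p_1)\cup\mathbf{g}(p_2)$ if $p=p_1+p_2$ with $p_1,p_2\in\mathbb{M}_A^2$ (i.e. both coordinates of $p$ are decomposable), and $\mathbf{g}(p)=\{p\}$ otherwise; for a set $S$, $\mathbf{g}(S)=\bigcup_{p\in S}\mathbf{g}(p)$. For $y\in\mathbb{M}_A$, $g(y)\subseteq A$ is the set of letters occurring in $y$. For $a\in A$, $y\in\mathbb{M}_A$, $f_{a\to y}:\mathbb{M}_A\to\mathbb{M}_A$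 is the homomorphism sending $a\mapsto y$ and fixing other generators, and $f^2_{a\to y}$ applies it to both coordinates of each pair of a set. The transformations are: (I) if some $(x,y)\in R$ is not in $\mathcal{G}(\mathbb{M}_A^2)$, replace by $(A\mid\mathbf{g}(R))$. (II) if $(a,y),(a,y')\in R\cap(A\times(\mathbb{M}_A\setminus A))$ with $y\neq y'$, replace by $(A\mid (R\setminus\{(a,y')\})\cup\mathbf{g}((y,y')))$. (III) if $(x,b),(x',b)\in R\cap((\mathbb{M}_A\setminus A)\times A)$ with $x\neq x'$, replace by $(A\mid (R\setminus\{(x',b)\})\cup\mathbf{g}((x,x')))$. (IV) if some $(x,y)\in R$ has $x\notin A$, replace by $(A\mid (R\setminus\{(x,y)\})\cup\{(y,x)\})$. (V) if some $a\in A$ has $(a,y)\notin R$ for all $y\in\mathbb{M}_A$ and $(a,a)\notin R$, replace by $(A\mid R\cup\{(a,a)\})$. (VI) if $(a,y),(a',y)\in R\cap(A\times\mathbb{M}_A)$ with $a\neq a'$, replace by $(A\setminus\{a'\}\mid f^2_{a'\to a}(R\setminus\{(a',y)\}))$. (VII) if some $(a,y)\in R\cap(A\times\mathbb{M}_A)$ has $a\notin g(y)$ and $(a,y')\notin R$ for every $y'\neq y$, replace by $(A\setminus\{a\}\mid f^2_{a\to y}(R))$. *)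

theory Defs
  imports Main
begin

datatype 'a magma = Gen 'a | Op "'a magma" "'a magma"

definition words :: "'a set \<Rightarrow> 'a magma set" where
  "words A = {w. set_magma w \<subseteq> A}"

definition is_letter :: "'a magma \<Rightarrow> bool" where
  "is_letter w \<longleftrightarrow> (\<exists>a. w = Gen a)"

definition closed_cong :: "'a set \<Rightarrow> ('a magma \<times> 'a magma) set \<Rightarrow> bool" where
  "closed_cong A \<theta> \<longleftrightarrow>
     equiv (words A) \<theta> \<and>
     (\<forall>x y x' y'. (x, y) \<in> \<theta> \<longrightarrow> (x', y') \<in> \<theta> \<longrightarrow> (Op x x', Op y y') \<in> \<theta>) \<and>
     (\<forall>x y x' y'. (Op x x', Op y y') \<in> \<theta> \<longrightarrow> (x, y) \<in> \<theta> \<and> (x', y') \<in> \<theta>)"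

definition gen_cong :: "'a set \<Rightarrow> ('a magma \<times> 'a magma) set \<Rightarrow> ('a magma \<times> 'a magma) set" where
  "gen_cong A X = \<Inter>{\<theta>. closed_cong A \<theta> \<and> X \<subseteq> \<theta>}"

definition fin_pres :: "'a set \<Rightarrow> ('a magma \<times> 'a magma) set \<Rightarrow> bool" where
  "fin_pres A R \<longleftrightarrow> finite A \<and> A \<noteq> {} \<and> finite R \<and> R \<subseteq> words A \<times> words A"

definition pres_carrier :: "'a set \<Rightarrow> ('a magma \<times> 'a magma) set \<Rightarrow> 'a magma set set" where
  "pres_carrier A R = words A // gen_cong A R"

text \<open>Operation on classes: [x] + [y] = [x+y] (well defined for a congruence).\<close>
definition pres_op :: "'a set \<Rightarrow> ('a magma \<times> 'a magma) set \<Rightarrow> 'a magma set \<Rightarrow> 'a magma set \<Rightarrow> 'a magma set" where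
  "pres_op A R X Y = (\<Union>x\<in>X. \<Union>y\<in>Y. gen_cong A R `` {Op x y})"

definition pres_iso :: "'a set \<Rightarrow> ('a magma \<times> 'a magma) set \<Rightarrow> 'b set \<Rightarrow> ('b magma \<times> 'b magma) set \<Rightarrow> bool" where
  "pres_iso A R A' R' \<longleftrightarrow>
    (\<exists>h. bij_betw h (pres_carrier A R) (pres_carrier A' R') \<and>
         (\<forall>X\<in>pres_carrier A R. \<forall>Y\<in>pres_carrier A R.
             h (pres_op A R X Y) = pres_op A' R' (h X) (h Y)))"

fun gdec :: "'a magma \<times> 'a magma \<Rightarrow> ('a magma \<times> 'a magma) set" where
  "gdec (Op x1 x2, Op y1 y2) = gdec (x1, y1) \<union> gdec (x2, y2)"
| "gdec p = {p}"

definition gdec_set :: "('a magma \<times> 'a magma) set \<Rightarrow> ('a magma \<times> 'a magma) set" where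
  "gdec_set S = (\<Union>p\<in>S. gdec p)"

text \<open>Minimal generating set of M_A^2.\<close>
definition gens2 :: "'a set \<Rightarrow> ('a magma \<times> 'a magma) set" where
  "gens2 A = (Gen ` A \<times> words A) \<union> (words A \<times> Gen ` A)"

primrec subst :: "'a \<Rightarrow> 'a magma \<Rightarrow> 'a magma \<Rightarrow> 'a magma" where
  "subst a y (Gen b) = (if b = a then y else Gen b)"
| "subst a y (Op u v) = Op (subst a y u) (subst a y v)"

definition subst2 :: "'a \<Rightarrow> 'a magma \<Rightarrow> ('a magma \<times> 'a magma) set \<Rightarrow> ('a magma \<times> 'a magma) set" where
  "subst2 a y S = (\<lambda>(u, v). (subst a y u, subst a y v)) ` S"

definition transformation ::
  "'a set \<Rightarrow> ('a magma \<times> 'a magma) set \<Rightarrow> 'a set \<Rightarrow> ('a magma \<times> 'a magma) set \<Rightarrow> bool" where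
  "transformation A R A' R' \<longleftrightarrow>
    \<comment> \<open>(I)\<close>
    ((\<exists>p\<in>R. p \<notin> gens2 A) \<and> A' = A \<and> R' = gdec_set R)
  \<or> \<comment> \<open>(II)\<close>
    (\<exists>a y y'. a \<in> A \<and> (Gen a, y) \<in> R \<and> (Gen a, y') \<in> R \<and>
       y \<in> words A - Gen ` A \<and> y' \<in> words A - Gen ` A \<and> y \<noteq> y' \<and>
       A' = A \<and> R' = (R - {(Gen a, y')}) \<union> gdec (y, y'))
  \<or> \<comment> \<open>(III)\<close>
    (\<exists>x x' b. b \<in> A \<and> (x, Gen b) \<in> R \<and> (x', Gen b) \<in> R \<and>
       x \<in> words A - Gen ` A \<and> x' \<in> words A - Gen ` A \<and> x \<noteq> x' \<and>
       A' = A \<and> R' = (R - {(x', Gen b)}) \<union> gdec (x, x'))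
  \<or> \<comment> \<open>(IV)\<close>
    (\<exists>x y. (x, y) \<in> R \<and> x \<notin> Gen ` A \<and>
       A' = A \<and> R' = (R - {(x, y)}) \<union> {(y, x)})
  \<or> \<comment> \<open>(V)\<close>
    (\<exists>a\<in>A. (\<forall>y\<in>words A. (Gen a, y) \<notin> R) \<and> (Gen a, Gen a) \<notin> R \<and>
       A' = A \<and> R' = R \<union> {(Gen a, Gen a)})
  \<or> \<comment> \<open>(VI)\<close>
    (\<exists>a a' y. a \<in> A \<and> a' \<in> A \<and> y \<in> words A \<and> (Gen a, y) \<in> R \<and> (Gen a', y) \<in> R \<and> a \<noteq> a' \<and>
       A' = A - {a'} \<and> R' = subst2 a' (Gen a) (R - {(Gen a', y)}))
  \<or> \<comment> \<open>(VII)\<close>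
    (\<exists>a y. a \<in> A \<and> y \<in> words A \<and> (Gen a, y) \<in> R \<and> a \<notin> set_magma y \<and>
       (\<forall>y'\<in>words A. y' \<noteq> y \<longrightarrow> (Gen a, y') \<notin> R) \<and>
       A' = A - {a} \<and> R' = subst2 a y R)"

end

theory Submission
  imports Defs
begin

lemma words_Gen[simp]: "Gen a \<in> words A \<longleftrightarrow> a \<in> A"
  by (simp add: words_def)

lemma words_Op[simp]: "Op x y \<in> words A \<longleftrightarrow> x \<in> words A \<and> y \<in> words A"
  by (simp add: words_def)

lemma cc_sub: "closed_cong A t \<Longrightarrow> (x, y) \<in> t \<Longrightarrow> x \<in> words A \<and> y \<in> words A"
  unfolding closed_cong_def equiv_def refl_on_def by blast

lemma cc_refl: "closed_cong A t \<Longrightarrow> x \<in> words A \<Longrightarrow> (x, x) \<in> t"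
  unfolding closed_cong_def equiv_def refl_on_def by blast

lemma cc_sym: "closed_cong A t \<Longrightarrow> (x, y) \<in> t \<Longrightarrow> (y, x) \<in> t"
  unfolding closed_cong_def equiv_def sym_def by blast

lemma cc_trans: "closed_cong A t \<Longrightarrow> (x, y) \<in> t \<Longrightarrow> (y, z) \<in> t \<Longrightarrow> (x, z) \<in> t"
  unfolding closed_cong_def equiv_def trans_def by blast

lemma cc_op: "closed_cong A t \<Longrightarrow> (x, y) \<in> t \<Longrightarrow> (x', y') \<in> t \<Longrightarrow> (Op x x', Op y y') \<in> t"
  unfolding closed_cong_def by blast

lemma cc_dec: "closed_cong A t \<Longrightarrow> (Op x x', Op y y') \<in> t \<Longrightarrow> (x, y) \<in> t \<and> (x', y') \<in> t"
  unfolding closed_cong_def by blast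

lemma cc_equiv: "closed_cong A t \<Longrightarrow> equiv (words A) t"
  unfolding closed_cong_def by blast

lemma cc_intro:
  assumes "t \<subseteq> words A \<times> words A"
    and "\<And>x. x \<in> words A \<Longrightarrow> (x, x) \<in> t"
    and "\<And>x y. (x, y) \<in> t \<Longrightarrow> (y, x) \<in> t"
    and "\<And>x y z. (x, y) \<in> t \<Longrightarrow> (y, z) \<in> t \<Longrightarrow> (x, z) \<in> t"
    and "\<And>x y x' y'. (x, y) \<in> t \<Longrightarrow> (x', y') \<in> t \<Longrightarrow> (Op x x', Op y y') \<in> t"
    and "\<And>x y x' y'. (Op x x', Op y y') \<in> t \<Longrightarrow> (x, y) \<in> t \<and> (x', y') \<in> t"
  shows "closed_cong A t"
proof -
  have "equiv (words A) t"
  proof (rule equivI)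
    show "t \<subseteq> words A \<times> words A" using assms(1) .
    show "refl_on (words A) t" unfolding refl_on_def using assms(1,2) by blast
    show "sym t" unfolding sym_def using assms(3) by blast
    show "trans t" unfolding trans_def using assms(4) by blast
  qed
  then show ?thesis unfolding closed_cong_def using assms(5,6) by blast
qed

lemma gen_cong_mem: "p \<in> gen_cong A X \<longleftrightarrow> (\<forall>t. closed_cong A t \<and> X \<subseteq> t \<longrightarrow> p \<in> t)"
  unfolding gen_cong_def by blast

lemma closed_full: "closed_cong A (words A \<times> words A)"
  by (rule cc_intro) auto

lemma gen_cong_closed:
  assumes "X \<subseteq> words A \<times> words A"
  shows "closed_cong A (gen_cong A X)"
proof (rule cc_intro)
  show "gen_cong A X \<subseteq> words A \<times> words A"
    using closed_full[of A] assms unfolding gen_cong_def by blast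
next
  fix x assume "x \<in> words A" then show "(x, x) \<in> gen_cong A X"
    unfolding gen_cong_mem by (blast intro: cc_refl)
next
  fix x y assume "(x, y) \<in> gen_cong A X" then show "(y, x) \<in> gen_cong A X"
    unfolding gen_cong_mem by (blast intro: cc_sym)
next
  fix x y z assume "(x, y) \<in> gen_cong A X" "(y, z) \<in> gen_cong A X"
  then show "(x, z) \<in> gen_cong A X"
    unfolding gen_cong_mem by (meson cc_trans)
next
  fix x y x' y' assume "(x, y) \<in> gen_cong A X" "(x', y') \<in> gen_cong A X"
  then show "(Op x x', Op y y') \<in> gen_cong A X"
    unfolding gen_cong_mem by (meson cc_op)
next
  fix x y x' y' assume "(Op x x', Op y y') \<in> gen_cong A X"
  then show "(x, y) \<in> gen_cong A X \<and> (x', y') \<in> gen_cong A X"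
    unfolding gen_cong_mem by (meson cc_dec)
qed

lemma gen_cong_inc: "X \<subseteq> gen_cong A X"
  unfolding gen_cong_def by blast

lemma gen_cong_least: "closed_cong A t \<Longrightarrow> X \<subseteq> t \<Longrightarrow> gen_cong A X \<subseteq> t"
  unfolding gen_cong_def by blast

lemma gdec_in: "closed_cong A t \<Longrightarrow> p \<in> t \<Longrightarrow> gdec p \<subseteq> t"
  by (induction p rule: gdec.induct) (auto dest: cc_dec)

lemma gdec_out: "closed_cong A t \<Longrightarrow> gdec p \<subseteq> t \<Longrightarrow> p \<in> t"
  by (induction p rule: gdec.induct) (auto intro: cc_op)

lemma same_cong:
  assumes "R \<subseteq> words A \<times> words A" "R' \<subseteq> words A \<times> words A"
    and "R \<subseteq> gen_cong A R'" "R' \<subseteq> gen_cong A R"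
  shows "pres_iso A R A R'"
proof -
  have "gen_cong A R = gen_cong A R'"
    using gen_cong_least[OF gen_cong_closed[OF assms(1)] assms(4)]
      gen_cong_least[OF gen_cong_closed[OF assms(2)] assms(3)] by blast
  then show ?thesis
    unfolding pres_iso_def pres_carrier_def pres_op_def
    by (intro exI[of _ id]) auto
qed

lemma subst_words: "u \<in> words A \<Longrightarrow> t \<in> words (A - {c}) \<Longrightarrow> subst c t u \<in> words (A - {c})"
  by (induction u) auto

lemma subst_id: "c \<notin> set_magma u \<Longrightarrow> subst c t u = u"
  by (induction u) auto

lemma subst_cong: "closed_cong A th \<Longrightarrow> (Gen c, t) \<in> th \<Longrightarrow> u \<in> words A \<Longrightarrow> (u, subst c t u) \<in> th"
  by (induction u) (auto intro: cc_refl cc_op)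

lemma cc_pullback:
  assumes c: "closed_cong A' t'" and fw: "\<And>u. u \<in> words A \<Longrightarrow> f u \<in> words A'"
    and fh: "\<And>x y. f (Op x y) = Op (f x) (f y)"
    and P: "P = {(u,v). u \<in> words A \<and> v \<in> words A \<and> (f u, f v) \<in> t'}"
  shows "closed_cong A P"
proof (rule cc_intro)
  have m: "(u, v) \<in> P \<longleftrightarrow> u \<in> words A \<and> v \<in> words A \<and> (f u, f v) \<in> t'" for u v
    using P by simp
  show "P \<subseteq> words A \<times> words A" using m by auto
  show "(x, x) \<in> P" if "x \<in> words A" for x
    using that m cc_refl[OF c fw[OF that]] by simp
  show "(y, x) \<in> P" if "(x, y) \<in> P" for x y
    using that m cc_sym[OF c] by simp
  show "(x, z) \<in> P" if "(x, y) \<in> P" "(y, z) \<in> P" for x y z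
  proof -
    have "(f x, f y) \<in> t'" "(f y, f z) \<in> t'" using that m by simp_all
    then have "(f x, f z) \<in> t'" by (rule cc_trans[OF c])
    then show ?thesis using that m by simp
  qed
  show "(Op x x', Op y y') \<in> P" if "(x, y) \<in> P" "(x', y') \<in> P" for x y x' y'
  proof -
    have "(f x, f y) \<in> t'" "(f x', f y') \<in> t'" using that m by simp_all
    then have "(Op (f x) (f x'), Op (f y) (f y')) \<in> t'" by (rule cc_op[OF c])
    then show ?thesis using that m fh by simp
  qed
  show "(x, y) \<in> P \<and> (x', y') \<in> P" if "(Op x x', Op y y') \<in> P" for x y x' y'
  proof -
    have "(Op (f x) (f x'), Op (f y) (f y')) \<in> t'" using that m fh by simp
    then have "(f x, f y) \<in> t' \<and> (f x', f y') \<in> t'" by (rule cc_dec[OF c])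
    then show ?thesis using that m by simp
  qed
qed

lemma cc_restrict:
  assumes c: "closed_cong A t" and B: "B \<subseteq> A"
    and P: "P = t \<inter> words B \<times> words B"
  shows "closed_cong B P"
proof (rule cc_intro)
  have m: "(u, v) \<in> P \<longleftrightarrow> (u, v) \<in> t \<and> u \<in> words B \<and> v \<in> words B" for u v
    using P by simp
  have wB: "x \<in> words A" if "x \<in> words B" for x using B that unfolding words_def by blast
  show "P \<subseteq> words B \<times> words B" using m by auto
  show "(x, x) \<in> P" if "x \<in> words B" for x
    using that m cc_refl[OF c wB[OF that]] by simp
  show "(y, x) \<in> P" if "(x, y) \<in> P" for x y
    using that m cc_sym[OF c] by simp
  show "(x, z) \<in> P" if "(x, y) \<in> P" "(y, z) \<in> P" for x y z
  proof -
    have "(x, y) \<in> t" "(y, z) \<in> t" using that m by simp_all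
    then have "(x, z) \<in> t" by (rule cc_trans[OF c])
    then show ?thesis using that m by simp
  qed
  show "(Op x x', Op y y') \<in> P" if "(x, y) \<in> P" "(x', y') \<in> P" for x y x' y'
  proof -
    have "(x, y) \<in> t" "(x', y') \<in> t" using that m by simp_all
    then have "(Op x x', Op y y') \<in> t" by (rule cc_op[OF c])
    then show ?thesis using that m by simp
  qed
  show "(x, y) \<in> P \<and> (x', y') \<in> P" if "(Op x x', Op y y') \<in> P" for x y x' y'
  proof -
    have "(Op x x', Op y y') \<in> t" using that m by simp
    then have "(x, y) \<in> t \<and> (x', y') \<in> t" by (rule cc_dec[OF c])
    then show ?thesis using that m by simp
  qed
qed

lemma iso_via_hom:
  assumes c1: "closed_cong A (gen_cong A R)" and c2: "closed_cong A' (gen_cong A' R')"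
    and fw: "\<And>u. u \<in> words A \<Longrightarrow> f u \<in> words A'"
    and fe: "\<And>u v. u \<in> words A \<Longrightarrow> v \<in> words A \<Longrightarrow>
               (u, v) \<in> gen_cong A R \<longleftrightarrow> (f u, f v) \<in> gen_cong A' R'"
    and fs: "\<And>w. w \<in> words A' \<Longrightarrow> \<exists>u\<in>words A. f u = w"
    and fh: "\<And>x y. f (Op x y) = Op (f x) (f y)"
  shows "pres_iso A R A' R'"
proof -
  define th where "th = gen_cong A R"
  define th' where "th' = gen_cong A' R'"
  note c1 = c1[folded th_def] and c2 = c2[folded th'_def]
  note fe = fe[folded th_def th'_def]
  have e1: "equiv (words A) th" using c1 by (rule cc_equiv)
  have e2: "equiv (words A') th'" using c2 by (rule cc_equiv)
  define h where "h X = th' `` (f ` X)" for X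
  have hc: "h (th `` {x}) = th' `` {f x}" if x: "x \<in> words A" for x
  proof
    show "th' `` {f x} \<subseteq> h (th `` {x})"
      unfolding h_def using cc_refl[OF c1 x] by blast
    show "h (th `` {x}) \<subseteq> th' `` {f x}"
    proof
      fix z assume "z \<in> h (th `` {x})"
      then obtain x' where x': "(x, x') \<in> th" "(f x', z) \<in> th'" unfolding h_def by blast
      have "x' \<in> words A" using cc_sub[OF c1 x'(1)] by blast
      then have "(f x, f x') \<in> th'" using fe x x'(1) by blast
      then show "z \<in> th' `` {f x}" using cc_trans[OF c2 _ x'(2)] by blast
    qed
  qed
  have opc: "(\<Union>x'\<in>T``{x}. \<Union>y'\<in>T``{y}. T `` {Op x' y'}) = T `` {Op x y}"
    if c: "closed_cong B T" and x: "x \<in> words B" and y: "y \<in> words B" for B T x y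
  proof
    show "T `` {Op x y} \<subseteq> (\<Union>x'\<in>T``{x}. \<Union>y'\<in>T``{y}. T `` {Op x' y'})"
      using cc_refl[OF c x] cc_refl[OF c y] by blast
    show "(\<Union>x'\<in>T``{x}. \<Union>y'\<in>T``{y}. T `` {Op x' y'}) \<subseteq> T `` {Op x y}"
    proof (clarsimp)
      fix x' y' z assume a: "(x, x') \<in> T" "(y, y') \<in> T" "(Op x' y', z) \<in> T"
      have "(Op x y, Op x' y') \<in> T" using cc_op[OF c a(1) a(2)] .
      then show "(Op x y, z) \<in> T" using cc_trans[OF c _ a(3)] by blast
    qed
  qed
  show ?thesis unfolding pres_iso_def pres_carrier_def pres_op_def
  proof (intro exI conjI ballI)
    show "bij_betw h (words A // gen_cong A R) (words A' // gen_cong A' R')"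
      unfolding th_def[symmetric] th'_def[symmetric] bij_betw_def
    proof (intro conjI)
      show "inj_on h (words A // th)"
      proof (rule inj_onI)
        fix X Y assume "X \<in> words A // th" "Y \<in> words A // th" "h X = h Y"
        then obtain x y where xy: "x \<in> words A" "y \<in> words A" "X = th``{x}" "Y = th``{y}"
          "th' `` {f x} = th' `` {f y}"
          by (metis hc quotientE)
        then have "(f x, f y) \<in> th'" using eq_equiv_class_iff[OF e2] fw by blast
        then have "(x, y) \<in> th" using fe xy by blast
        then show "X = Y" using xy eq_equiv_class_iff[OF e1] by blast
      qed
      show "h ` (words A // th) = words A' // th'"
      proof
        show "h ` (words A // th) \<subseteq> words A' // th'"
          by (auto elim!: quotientE simp: hc fw intro!: quotientI)
        show "words A' // th' \<subseteq> h ` (words A // th)"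
        proof
          fix W assume "W \<in> words A' // th'"
          then obtain w where w: "w \<in> words A'" "W = th' `` {w}" by (rule quotientE)
          then obtain u where u: "u \<in> words A" "f u = w" using fs by blast
          then have "W = h (th `` {u})" using hc w by simp
          moreover have "th `` {u} \<in> words A // th" by (rule quotientI[OF u(1)])
          ultimately show "W \<in> h ` (words A // th)" by (rule image_eqI)
        qed
      qed
    qed
  next
    fix X Y assume X: "X \<in> words A // gen_cong A R" and Y: "Y \<in> words A // gen_cong A R"
    obtain x where x: "X = th``{x}" "x \<in> words A" using X[folded th_def] by (rule quotientE)
    obtain y where y: "Y = th``{y}" "y \<in> words A" using Y[folded th_def] by (rule quotientE)
    have xy: "x \<in> words A" "y \<in> words A" "X = th``{x}" "Y = th``{y}" using x y by simp_all
    have "h (\<Union>x\<in>X. \<Union>y\<in>Y. gen_cong A R `` {Op x y}) = h (th `` {Op x y})"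
      using opc[OF c1 xy(1,2)] xy unfolding th_def by simp
    also have "\<dots> = th' `` {Op (f x) (f y)}" using hc xy fh by simp
    also have "\<dots> = (\<Union>x'\<in>th'``{f x}. \<Union>y'\<in>th'``{f y}. th' `` {Op x' y'})"
      using opc[OF c2 fw[OF xy(1)] fw[OF xy(2)]] by simp
    also have "\<dots> = (\<Union>x\<in>h X. \<Union>y\<in>h Y. gen_cong A' R' `` {Op x y})"
      using hc xy unfolding th'_def by simp
    finally show "h (\<Union>x\<in>X. \<Union>y\<in>Y. gen_cong A R `` {Op x y}) =
       (\<Union>x\<in>h X. \<Union>y\<in>h Y. gen_cong A' R' `` {Op x y})" .
  qed
qed

lemma subst_iso:
  assumes fp1: "fin_pres A R" and fp2: "fin_pres A' R'" and A': "A' = A - {c}"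
    and t: "t \<in> words A'" and ct: "(Gen c, t) \<in> gen_cong A R"
    and R'sub: "R' \<subseteq> subst2 c t R"
    and Rimg: "\<And>u v. (u, v) \<in> R \<Longrightarrow> (subst c t u, subst c t v) \<in> gen_cong A' R'"
  shows "pres_iso A R A' R'"
proof -
  have R1: "R \<subseteq> words A \<times> words A" and R2: "R' \<subseteq> words A' \<times> words A'"
    using fp1 fp2 unfolding fin_pres_def by auto
  have c1: "closed_cong A (gen_cong A R)" by (rule gen_cong_closed[OF R1])
  have c2: "closed_cong A' (gen_cong A' R')" by (rule gen_cong_closed[OF R2])
  have AA: "A' \<subseteq> A" using A' by blast
  have fw: "subst c t u \<in> words A'" if "u \<in> words A" for u
    using subst_words[OF that] t A' by simp
  have fh: "\<And>x y. subst c t (Op x y) = Op (subst c t x) (subst c t y)" by simp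
  have wA: "w \<in> words A" if "w \<in> words A'" for w using that AA unfolding words_def by blast
  have fs: "\<exists>u\<in>words A. subst c t u = w" if "w \<in> words A'" for w
  proof -
    have "c \<notin> set_magma w" using that A' unfolding words_def by blast
    then have "subst c t w = w" by (rule subst_id)
    then show ?thesis using wA[OF that] by blast
  qed
  have uf: "(u, subst c t u) \<in> gen_cong A R" if "u \<in> words A" for u
    by (rule subst_cong[OF c1 ct that])
  define P where "P = {(u,v). u \<in> words A \<and> v \<in> words A \<and> (subst c t u, subst c t v) \<in> gen_cong A' R'}"
  have cP: "closed_cong A P" by (rule cc_pullback[OF c2 fw fh P_def])
  have RP: "R \<subseteq> P" using R1 Rimg unfolding P_def by blast
  have thP: "gen_cong A R \<subseteq> P" by (rule gen_cong_least[OF cP RP])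
  define S where "S = gen_cong A R \<inter> words A' \<times> words A'"
  have cS: "closed_cong A' S" by (rule cc_restrict[OF c1 AA S_def])
  have RS: "R' \<subseteq> S"
  proof
    fix p assume p: "p \<in> R'"
    have "p \<in> (\<lambda>(u, v). (subst c t u, subst c t v)) ` R" using p R'sub unfolding subst2_def by blast
    then obtain q where q: "q \<in> R" "p = (\<lambda>(u, v). (subst c t u, subst c t v)) q" by (rule imageE)
    obtain u v where "q = (u, v)" by (cases q)
    then have uv: "(u, v) \<in> R" "p = (subst c t u, subst c t v)" using q by simp_all
    have u: "u \<in> words A" and v: "v \<in> words A" using uv(1) R1 by auto
    have "(u, v) \<in> gen_cong A R" using uv(1) gen_cong_inc by blast
    then have "(subst c t u, v) \<in> gen_cong A R" using cc_trans[OF c1 cc_sym[OF c1 uf[OF u]]] by blast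
    then have "(subst c t u, subst c t v) \<in> gen_cong A R" using cc_trans[OF c1 _ uf[OF v]] by blast
    then show "p \<in> S" using p R2 uv(2) unfolding S_def by blast
  qed
  have th'S: "gen_cong A' R' \<subseteq> S" by (rule gen_cong_least[OF cS RS])
  show ?thesis
  proof (rule iso_via_hom[OF c1 c2 fw _ fs fh])
    fix u v assume u: "u \<in> words A" and v: "v \<in> words A"
    show "(u, v) \<in> gen_cong A R \<longleftrightarrow> (subst c t u, subst c t v) \<in> gen_cong A' R'"
    proof
      assume "(u, v) \<in> gen_cong A R"
      then show "(subst c t u, subst c t v) \<in> gen_cong A' R'" using thP unfolding P_def by blast
    next
      assume "(subst c t u, subst c t v) \<in> gen_cong A' R'"
      then have "(subst c t u, subst c t v) \<in> gen_cong A R" using th'S unfolding S_def by blast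
      then have "(u, subst c t v) \<in> gen_cong A R" using cc_trans[OF c1 uf[OF u]] by blast
      then show "(u, v) \<in> gen_cong A R" using cc_trans[OF c1 _ cc_sym[OF c1 uf[OF v]]] by blast
    qed
  qed
qed

lemma subst2_mem: "(u, v) \<in> S \<Longrightarrow> (subst c t u, subst c t v) \<in> subst2 c t S"
  unfolding subst2_def by (rule image_eqI[where x="(u, v)"]) simp_all

lemma subst2_mono: "S \<subseteq> T \<Longrightarrow> subst2 c t S \<subseteq> subst2 c t T"
  unfolding subst2_def by (rule image_mono)

theorem lemma7p7:
  fixes A A' :: "'a set" and R R' :: "('a magma \<times> 'a magma) set"
  assumes "fin_pres A R" and "fin_pres A' R'"
    and "transformation A R A' R'"
  shows "pres_iso A R A' R'"
proof -
  have fp1: "fin_pres A R" and fp2: "fin_pres A' R'" by fact+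
  have R1: "R \<subseteq> words A \<times> words A" and R2: "R' \<subseteq> words A' \<times> words A'"
    using fp1 fp2 unfolding fin_pres_def by auto
  have c1: "closed_cong A (gen_cong A R)" by (rule gen_cong_closed[OF R1])
  have c2: "closed_cong A' (gen_cong A' R')" by (rule gen_cong_closed[OF R2])
  have i1: "p \<in> gen_cong A R" if "p \<in> R" for p using that gen_cong_inc by blast
  have i2: "p \<in> gen_cong A' R'" if "p \<in> R'" for p using that gen_cong_inc by blast
  show ?thesis using assms(3) unfolding transformation_def
  proof (elim disjE)
    assume h: "(\<exists>p\<in>R. p \<notin> gens2 A) \<and> A' = A \<and> R' = gdec_set R"
    then have AA: "A' = A" and RR: "R' = gdec_set R" by auto
    have "pres_iso A R A R'"
    proof (rule same_cong[OF R1])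
      show "R' \<subseteq> words A \<times> words A" using R2 AA by simp
      show "R \<subseteq> gen_cong A R'"
      proof
        fix p assume p: "p \<in> R"
        have "gdec p \<subseteq> gen_cong A' R'" using p i2 RR unfolding gdec_set_def by blast
        then show "p \<in> gen_cong A R'" using gdec_out[OF c2] AA by simp
      qed
      show "R' \<subseteq> gen_cong A R"
      proof
        fix q assume "q \<in> R'"
        then obtain p where p: "p \<in> R" "q \<in> gdec p" using RR unfolding gdec_set_def by blast
        then show "q \<in> gen_cong A R" using gdec_in[OF c1 i1[OF p(1)]] by blast
      qed
    qed
    then show ?thesis using AA by simp
  next
    assume "\<exists>a y y'. a \<in> A \<and> (Gen a, y) \<in> R \<and> (Gen a, y') \<in> R \<and>
       y \<in> words A - Gen ` A \<and> y' \<in> words A - Gen ` A \<and> y \<noteq> y' \<and>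
       A' = A \<and> R' = (R - {(Gen a, y')}) \<union> gdec (y, y')"
    then obtain a y y' where h: "(Gen a, y) \<in> R" "(Gen a, y') \<in> R" "y \<noteq> y'" "A' = A"
      "R' = (R - {(Gen a, y')}) \<union> gdec (y, y')" by blast
    note c2' = c2[unfolded h(4)]
    have "pres_iso A R A R'"
    proof (rule same_cong[OF R1])
      show "R' \<subseteq> words A \<times> words A" using R2 h(4) by simp
      show "R \<subseteq> gen_cong A R'"
      proof
        fix p assume p: "p \<in> R"
        show "p \<in> gen_cong A R'"
        proof (cases "p = (Gen a, y')")
          case True
          have "gdec (y, y') \<subseteq> gen_cong A R'" using i2 h(4,5) by blast
          then have "(y, y') \<in> gen_cong A R'" using gdec_out[OF c2'] by blast
          moreover have "(Gen a, y) \<in> gen_cong A R'" using i2 h by simp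
          ultimately show ?thesis using True cc_trans[OF c2'] by blast
        next
          case False then show ?thesis using p i2 h(4,5) by simp
        qed
      qed
      show "R' \<subseteq> gen_cong A R"
      proof -
        have "(y, y') \<in> gen_cong A R" using cc_trans[OF c1 cc_sym[OF c1 i1[OF h(1)]] i1[OF h(2)]] .
        then have "gdec (y, y') \<subseteq> gen_cong A R" by (rule gdec_in[OF c1])
        then show ?thesis using h(5) i1 by blast
      qed
    qed
    then show ?thesis using h(4) by simp
  next
    assume "\<exists>x x' b. b \<in> A \<and> (x, Gen b) \<in> R \<and> (x', Gen b) \<in> R \<and>
       x \<in> words A - Gen ` A \<and> x' \<in> words A - Gen ` A \<and> x \<noteq> x' \<and>
       A' = A \<and> R' = (R - {(x', Gen b)}) \<union> gdec (x, x')"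
    then obtain x x' b where h: "(x, Gen b) \<in> R" "(x', Gen b) \<in> R" "x \<noteq> x'" "A' = A"
      "R' = (R - {(x', Gen b)}) \<union> gdec (x, x')" by blast
    note c2' = c2[unfolded h(4)]
    have "pres_iso A R A R'"
    proof (rule same_cong[OF R1])
      show "R' \<subseteq> words A \<times> words A" using R2 h(4) by simp
      show "R \<subseteq> gen_cong A R'"
      proof
        fix p assume p: "p \<in> R"
        show "p \<in> gen_cong A R'"
        proof (cases "p = (x', Gen b)")
          case True
          have "gdec (x, x') \<subseteq> gen_cong A R'" using i2 h(4,5) by blast
          then have "(x, x') \<in> gen_cong A R'" using gdec_out[OF c2'] by blast
          then have "(x', x) \<in> gen_cong A R'" by (rule cc_sym[OF c2'])
          moreover have "(x, Gen b) \<in> gen_cong A R'" using i2 h by simp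
          ultimately show ?thesis using True cc_trans[OF c2'] by blast
        next
          case False then show ?thesis using p i2 h(4,5) by simp
        qed
      qed
      show "R' \<subseteq> gen_cong A R"
      proof -
        have "(x, x') \<in> gen_cong A R" using cc_trans[OF c1 i1[OF h(1)] cc_sym[OF c1 i1[OF h(2)]]] .
        then have "gdec (x, x') \<subseteq> gen_cong A R" by (rule gdec_in[OF c1])
        then show ?thesis using h(5) i1 by blast
      qed
    qed
    then show ?thesis using h(4) by simp
  next
    assume "\<exists>x y. (x, y) \<in> R \<and> x \<notin> Gen ` A \<and>
       A' = A \<and> R' = (R - {(x, y)}) \<union> {(y, x)}"
    then obtain x y where h: "(x, y) \<in> R" "A' = A" "R' = (R - {(x, y)}) \<union> {(y, x)}" by blast
    note c2' = c2[unfolded h(2)]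
    have "pres_iso A R A R'"
    proof (rule same_cong[OF R1])
      show "R' \<subseteq> words A \<times> words A" using R2 h(2) by simp
      show "R \<subseteq> gen_cong A R'"
      proof
        fix p assume p: "p \<in> R"
        show "p \<in> gen_cong A R'"
        proof (cases "p = (x, y)")
          case True
          have "(y, x) \<in> gen_cong A R'" using i2 h by simp
          then show ?thesis using True cc_sym[OF c2'] by blast
        next
          case False then show ?thesis using p i2 h by simp
        qed
      qed
      show "R' \<subseteq> gen_cong A R"
        using h(3) i1 cc_sym[OF c1 i1[OF h(1)]] by blast
    qed
    then show ?thesis using h(2) by simp
  next
    assume "\<exists>a\<in>A. (\<forall>y\<in>words A. (Gen a, y) \<notin> R) \<and> (Gen a, Gen a) \<notin> R \<and>
       A' = A \<and> R' = R \<union> {(Gen a, Gen a)}"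
    then obtain a where h: "a \<in> A" "A' = A" "R' = R \<union> {(Gen a, Gen a)}" by blast
    have "pres_iso A R A R'"
    proof (rule same_cong[OF R1])
      show "R' \<subseteq> words A \<times> words A" using R2 h(2) by simp
      show "R \<subseteq> gen_cong A R'" using i2 h by auto
      show "R' \<subseteq> gen_cong A R" using h(3) i1 cc_refl[OF c1, of "Gen a"] h(1) by auto
    qed
    then show ?thesis using h(2) by simp
  next
    assume "\<exists>a a' y. a \<in> A \<and> a' \<in> A \<and> y \<in> words A \<and> (Gen a, y) \<in> R \<and> (Gen a', y) \<in> R \<and> a \<noteq> a' \<and>
       A' = A - {a'} \<and> R' = subst2 a' (Gen a) (R - {(Gen a', y)})"
    then obtain a a' y where h: "a \<in> A" "(Gen a, y) \<in> R" "(Gen a', y) \<in> R" "a \<noteq> a'"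
       "A' = A - {a'}" "R' = subst2 a' (Gen a) (R - {(Gen a', y)})" by blast
    show ?thesis
    proof (rule subst_iso[OF fp1 fp2 h(5)])
      show "Gen a \<in> words A'" using h by simp
      show "(Gen a', Gen a) \<in> gen_cong A R"
        using cc_trans[OF c1 i1[OF h(3)] cc_sym[OF c1 i1[OF h(2)]]] .
      have "subst2 a' (Gen a) (R - {(Gen a', y)}) \<subseteq> subst2 a' (Gen a) R" by (rule subst2_mono) blast
      then show "R' \<subseteq> subst2 a' (Gen a) R" using h(6) by simp
      fix u v assume uv: "(u, v) \<in> R"
      show "(subst a' (Gen a) u, subst a' (Gen a) v) \<in> gen_cong A' R'"
      proof (cases "(u, v) = (Gen a', y)")
        case True
        have "(Gen a, y) \<in> R - {(Gen a', y)}" using h by simp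
        then have "(subst a' (Gen a) (Gen a), subst a' (Gen a) y) \<in> subst2 a' (Gen a) (R - {(Gen a', y)})"
          by (rule subst2_mem)
        then have "(subst a' (Gen a) (Gen a), subst a' (Gen a) y) \<in> R'" using h(6) by simp
        then show ?thesis using True i2 h(4) by simp
      next
        case False
        then have "(u, v) \<in> R - {(Gen a', y)}" using uv by simp
        then have "(subst a' (Gen a) u, subst a' (Gen a) v) \<in> subst2 a' (Gen a) (R - {(Gen a', y)})"
          by (rule subst2_mem)
        then show ?thesis using h(6) i2 by simp
      qed
    qed
  next
    assume "\<exists>a y. a \<in> A \<and> y \<in> words A \<and> (Gen a, y) \<in> R \<and> a \<notin> set_magma y \<and>
       (\<forall>y'\<in>words A. y' \<noteq> y \<longrightarrow> (Gen a, y') \<notin> R) \<and>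
       A' = A - {a} \<and> R' = subst2 a y R"
    then obtain a y where h: "y \<in> words A" "(Gen a, y) \<in> R" "a \<notin> set_magma y"
       "A' = A - {a}" "R' = subst2 a y R" by blast
    show ?thesis
    proof (rule subst_iso[OF fp1 fp2 h(4)])
      show "y \<in> words A'" using h unfolding words_def by blast
      show "(Gen a, y) \<in> gen_cong A R" using i1[OF h(2)] .
      show "R' \<subseteq> subst2 a y R" using h(5) by simp
      fix u v assume uv: "(u, v) \<in> R"
      show "(subst a y u, subst a y v) \<in> gen_cong A' R'"
      proof -
        have "(subst a y u, subst a y v) \<in> subst2 a y R" by (rule subst2_mem[OF uv])
        then show ?thesis using h(5) i2 by simp
      qed
    qed
  qed
qed

end
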